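(* Let $f:[0,1]\to[0,1]$ be a surjective continuous function that does not admit a splitting sequence. Let $F$ be the set of fixed points of $f$ and let $d$ be an accumulation point of $F$. Then $$\varprojlim f=\varprojlim([0,d],f|_{[0,d]})\cup\varprojlim([d,1],f|_{[d,1]})$$ and $$\varprojlim([0,d],f|_{[0,d]})\cap\varprojlim([d,1],f|_{[d,1]})=\{(d,d,\dots)\}.$$
   Context: $\varprojlim f=\{\mathbf x=(x_0,x_1,\dots)\in[0,1]^{\mathbb N}: f(x_{n+1})=x_n\ \forall n\}$ with the product topology. For a closed interval $J\subseteq[0,1]$, $\varprojlim(J,f|_J)=\{\mathbf x\in\varprojlim f: x_n\in J\text{ for all }n\}$. A sequence $(T_n)_{n\in\mathbb N}$ of closed intervals $T_n\subsetneq[0,1]$ (possibly degenerate) is tight if $f(T_{n+1})=T_n$ for every $n$ and $T_n$ is nondegenerate for all sufficiently large $n$. A tight sequence $(T_n)$, $T_n=[l_n,r_n]$, is a splitting sequence admitted by $f$ if there are an infinite set $N\subseteq\mathbb N$ and nondegenerate closed intervals $S_n\subseteq[0,1]$ ($n\in N$) with $S_n\cap T_n\subseteq\{l_n,r_n\}$ and $f(S_n)=f(T_n)$ for all $n\in N$. *)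

theory Defs
  imports "HOL-Analysis.Analysis"
begin

definition inv_lim :: "(real \<Rightarrow> real) \<Rightarrow> (nat \<Rightarrow> real) set" where
  "inv_lim f = {x. (\<forall>n. x n \<in> {0..1}) \<and> (\<forall>n. f (x (Suc n)) = x n)}"

definition inv_lim_on :: "real set \<Rightarrow> (real \<Rightarrow> real) \<Rightarrow> (nat \<Rightarrow> real) set" where
  "inv_lim_on J f = {x \<in> inv_lim f. \<forall>n. x n \<in> J}"

definition tight :: "(real \<Rightarrow> real) \<Rightarrow> (nat \<Rightarrow> real) \<Rightarrow> (nat \<Rightarrow> real) \<Rightarrow> bool" where
  "tight f l r \<longleftrightarrow>
     (\<forall>n. 0 \<le> l n \<and> l n \<le> r n \<and> r n \<le> 1 \<and> {l n..r n} \<noteq> {0..1}) \<and>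
     (\<forall>n. f ` {l (Suc n)..r (Suc n)} = {l n..r n}) \<and>
     (\<exists>m. \<forall>n\<ge>m. l n < r n)"

definition splitting_seq :: "(real \<Rightarrow> real) \<Rightarrow> (nat \<Rightarrow> real) \<Rightarrow> (nat \<Rightarrow> real) \<Rightarrow> bool" where
  "splitting_seq f l r \<longleftrightarrow> tight f l r \<and>
     (\<exists>N::nat set. infinite N \<and> (\<exists>a b :: nat \<Rightarrow> real. \<forall>n\<in>N.
        0 \<le> a n \<and> a n < b n \<and> b n \<le> 1 \<and>
        {a n..b n} \<inter> {l n..r n} \<subseteq> {l n, r n} \<and>
        f ` {a n..b n} = f ` {l n..r n}))"

definition admits_splitting_seq :: "(real \<Rightarrow> real) \<Rightarrow> bool" where
  "admits_splitting_seq f \<longleftrightarrow> (\<exists>l r. splitting_seq f l r)"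

end

theory Submission
  imports Defs
begin

lemma ivt_img:
  fixes f :: "real \<Rightarrow> real"
  assumes "continuous_on {u..v} f" "y \<in> {f u..f v} \<or> y \<in> {f v..f u}" "u \<le> v"
  shows "\<exists>w\<in>{u..v}. f w = y"
proof -
  have c: "connected (f ` {u..v})"
    using assms(1) connected_continuous_image connected_Icc by blast
  have "f u \<in> f ` {u..v}" "f v \<in> f ` {u..v}" using assms(3) by auto
  then have "y \<in> f ` {u..v}" using connected_contains_Icc[OF c] assms(2) by blast
  then show ?thesis by auto
qed

lemma sub0:
  fixes f :: "real \<Rightarrow> real"
  assumes cont: "continuous_on {x1..x2} f" and lt: "x1 < x2" and fa: "f x1 = a"
    and fb: "f x2 = b" and ab: "a < b"
  shows "\<exists>s t. x1 \<le> s \<and> s < t \<and> t \<le> x2 \<and> f ` {s..t} = {a..b}"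
proof -
  define A where "A = {x \<in> {x1..x2}. f x = a}"
  have clA: "closed A" unfolding A_def
    by (rule continuous_closed_preimage_constant[OF cont]) simp
  have "x1 \<in> A" using fa lt unfolding A_def by auto
  then have neA: "A \<noteq> {}" by auto
  have bdA: "bdd_above A" unfolding A_def by (rule bdd_aboveI[of _ x2]) auto
  define s where "s = Sup A"
  have sA: "s \<in> A" using closed_contains_Sup[OF neA bdA clA] s_def by simp
  have smax: "\<And>x. x \<in> A \<Longrightarrow> x \<le> s" using cSup_upper[OF _ bdA] s_def by auto
  have s1: "x1 \<le> s" "s \<le> x2" "f s = a" using sA unfolding A_def by auto
  have contS: "continuous_on {s..x2} f" by (rule continuous_on_subset[OF cont]) (use s1 in auto)
  define B where "B = {x \<in> {s..x2}. f x = b}"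
  have clB: "closed B" unfolding B_def
    by (rule continuous_closed_preimage_constant[OF contS]) simp
  have "x2 \<in> B" using fb s1 unfolding B_def by auto
  then have neB: "B \<noteq> {}" by auto
  have bdB: "bdd_below B" unfolding B_def by (rule bdd_belowI[of _ s]) auto
  define t where "t = Inf B"
  have tB: "t \<in> B" using closed_contains_Inf[OF neB bdB clB] t_def by simp
  have tmin: "\<And>x. x \<in> B \<Longrightarrow> t \<le> x" using cInf_lower[OF _ bdB] t_def by auto
  have t1: "s \<le> t" "t \<le> x2" "f t = b" using tB unfolding B_def by auto
  have st: "s < t" using t1 s1 ab by (metis order_le_less less_irrefl)
  have contT: "continuous_on {s..t} f" by (rule continuous_on_subset[OF cont]) (use s1 t1 in auto)
  have "f ` {s..t} = {a..b}"
  proof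
    show "{a..b} \<subseteq> f ` {s..t}"
    proof
      fix y assume "y \<in> {a..b}"
      then obtain w where "w \<in> {s..t}" "f w = y"
        using ivt_img[OF contT, of y] s1 t1 st by auto
      then show "y \<in> f ` {s..t}" by auto
    qed
  next
    show "f ` {s..t} \<subseteq> {a..b}"
    proof
      fix y assume "y \<in> f ` {s..t}"
      then obtain z where z: "z \<in> {s..t}" "f z = y" by auto
      show "y \<in> {a..b}"
      proof (rule ccontr)
        assume "y \<notin> {a..b}"
        then consider "f z < a" | "f z > b" using z by force
        then show False
        proof cases
          case 1
          have zs: "z > s" using 1 s1 z by (metis atLeastAtMost_iff le_less less_irrefl)
          have cz: "continuous_on {z..t} f" by (rule continuous_on_subset[OF contT]) (use z in auto)
          obtain w where w: "w \<in> {z..t}" "f w = a"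
            using ivt_img[OF cz, of a] 1 t1 ab z by auto
          have "w \<in> A" using w s1 t1 z unfolding A_def by auto
          then show False using smax w zs by fastforce
        next
          case 2
          have zt: "z < t" using 2 t1 z by (metis atLeastAtMost_iff le_less less_irrefl)
          have cz: "continuous_on {s..z} f" by (rule continuous_on_subset[OF contT]) (use z in auto)
          obtain w where w: "w \<in> {s..z}" "f w = b"
            using ivt_img[OF cz, of b] 2 s1 ab z by auto
          have "w \<in> B" using w s1 t1 z unfolding B_def by auto
          then show False using tmin w zt by fastforce
        qed
      qed
    qed
  qed
  then show ?thesis using s1 t1 st by blast
qed

lemma sub:
  fixes f :: "real \<Rightarrow> real"
  assumes cont: "continuous_on {u..v} f" and ab: "a < b" and sub: "{a..b} \<subseteq> f ` {u..v}"
  shows "\<exists>s t. u \<le> s \<and> s < t \<and> t \<le> v \<and> f ` {s..t} = {a..b}"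
proof -
  obtain x1 where x1: "x1 \<in> {u..v}" "f x1 = a" using sub ab by (metis atLeastAtMost_iff imageE less_imp_le order_refl subsetD)
  obtain x2 where x2: "x2 \<in> {u..v}" "f x2 = b" using sub ab by (metis atLeastAtMost_iff imageE less_imp_le order_refl subsetD)
  have "x1 \<noteq> x2" using x1 x2 ab by auto
  then consider "x1 < x2" | "x2 < x1" by linarith
  then show ?thesis
  proof cases
    case 1
    have c: "continuous_on {x1..x2} f" by (rule continuous_on_subset[OF cont]) (use x1 x2 in auto)
    obtain s t where "x1 \<le> s" "s < t" "t \<le> x2" "f ` {s..t} = {a..b}"
      using sub0[OF c 1 x1(2) x2(2) ab] by blast
    then show ?thesis using x1 x2 by (intro exI[of _ s] exI[of _ t]) auto
  next
    case 2
    have c: "continuous_on {x2..x1} (\<lambda>x. - f x)" by (intro continuous_intros continuous_on_subset[OF cont]) (use x1 x2 in auto)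
    obtain s t where st: "x2 \<le> s" "s < t" "t \<le> x1" "(\<lambda>x. - f x) ` {s..t} = {-b..-a}"
      using sub0[OF c 2, of "-b" "-a"] x1 x2 ab by auto
    have "f ` {s..t} = uminus ` ((\<lambda>x. - f x) ` {s..t})" by (simp add: image_image)
    also have "\<dots> = {a..b}" using st(4) by simp
    finally show ?thesis using st x1 x2 by (intro exI[of _ s] exI[of _ t]) auto
  qed
qed


lemma split_main:
  fixes f :: "real \<Rightarrow> real"
  assumes cont: "continuous_on {0..1} f" and a0: "0 \<le> a" and ab: "a < b" and b1: "b \<le> 1"
    and fa: "f a = a" and fb: "f b = b" and nfull: "\<not> (a = 0 \<and> b = 1)"
    and u0: "0 \<le> u" and uv: "u < v" and v1: "v \<le> 1"
    and disj: "{u..v} \<inter> {a..b} \<subseteq> {a, b}"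
    and ends: "(f u \<le> a \<and> b \<le> f v) \<or> (b \<le> f u \<and> f v \<le> a)"
  shows "admits_splitting_seq f"
proof -
  have cab: "continuous_on {a..b} f" by (rule continuous_on_subset[OF cont]) (use a0 b1 in auto)
  have cuv: "continuous_on {u..v} f" by (rule continuous_on_subset[OF cont]) (use u0 v1 in auto)
  have fab: "{a..b} \<subseteq> f ` {a..b}"
  proof
    fix y assume "y \<in> {a..b}"
    then obtain w where "w \<in> {a..b}" "f w = y" using ivt_img[OF cab, of y] fa fb ab by auto
    then show "y \<in> f ` {a..b}" by auto
  qed
  have fuv: "{a..b} \<subseteq> f ` {u..v}"
  proof
    fix y assume "y \<in> {a..b}"
    then obtain w where "w \<in> {u..v}" "f w = y" using ivt_img[OF cuv, of y] ends uv by auto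
    then show "y \<in> f ` {u..v}" by auto
  qed
  define Q where "Q = (\<lambda>l r (p::real \<times> real). l \<le> fst p \<and> fst p < snd p \<and> snd p \<le> r \<and> f ` {fst p..snd p} = {l..r})"
  have stepex: "\<exists>p. Q l r p" if hyp: "a \<le> l" "l < r" "r \<le> b" "{l..r} \<subseteq> f ` {l..r}" for l r
  proof -
    have c: "continuous_on {l..r} f" by (rule continuous_on_subset[OF cont]) (use hyp a0 b1 in auto)
    obtain s t where "l \<le> s" "s < t" "t \<le> r" "f ` {s..t} = {l..r}" using sub[OF c hyp(2,4)] by blast
    then show ?thesis unfolding Q_def by (intro exI[of _ "(s,t)"]) auto
  qed
  define lr where "lr = rec_nat (a,b) (\<lambda>n p. SOME q. Q (fst p) (snd p) q)"
  have lr0: "lr 0 = (a,b)" unfolding lr_def by simp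
  have lrS: "lr (Suc n) = (SOME q. Q (fst (lr n)) (snd (lr n)) q)" for n unfolding lr_def by simp
  define l where "l = (\<lambda>n. fst (lr n))"
  define r where "r = (\<lambda>n. snd (lr n))"
  have inv: "a \<le> l n \<and> l n < r n \<and> r n \<le> b \<and> {l n..r n} \<subseteq> f ` {l n..r n} \<and> Q (l n) (r n) (lr (Suc n))" for n
  proof (induction n)
    case 0
    have "Q (l 0) (r 0) (lr (Suc 0))" unfolding lrS l_def r_def
      by (rule someI_ex, rule stepex) (use lr0 ab fab in auto)
    then show ?case using lr0 ab fab unfolding l_def r_def by auto
  next
    case (Suc n)
    then have q: "Q (l n) (r n) (lr (Suc n))" by blast
    then have A: "a \<le> l (Suc n) \<and> l (Suc n) < r (Suc n) \<and> r (Suc n) \<le> b \<and> {l (Suc n)..r (Suc n)} \<subseteq> f ` {l (Suc n)..r (Suc n)}"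
      using Suc unfolding Q_def l_def r_def by auto
    have "Q (l (Suc n)) (r (Suc n)) (lr (Suc (Suc n)))" unfolding lrS[of "Suc n"] l_def r_def
      by (rule someI_ex, rule stepex) (use A in \<open>auto simp: l_def r_def\<close>)
    then show ?case using A by blast
  qed
  have img: "f ` {l (Suc n)..r (Suc n)} = {l n..r n}" for n using inv[of n] unfolding Q_def l_def r_def by auto
  have tight: "tight f l r" unfolding tight_def
  proof (intro conjI allI)
    fix n
    show "0 \<le> l n" "l n \<le> r n" "r n \<le> 1" using inv[of n] a0 b1 by auto
    show "{l n..r n} \<noteq> {0..1}"
    proof
      assume "{l n..r n} = {0..1}"
      then have "l n = 0" "r n = 1" using inv[of n] by (auto simp add: Icc_eq_Icc)
      then show False using inv[of n] a0 b1 nfull by auto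
    qed
    show "f ` {l (Suc n)..r (Suc n)} = {l n..r n}" by (rule img)
  next
    show "\<exists>m. \<forall>n\<ge>m. l n < r n" using inv by blast
  qed
  define P where "P = (\<lambda>n (p::real \<times> real). u \<le> fst p \<and> fst p < snd p \<and> snd p \<le> v \<and> f ` {fst p..snd p} = {l (n - 1)..r (n - 1)})"
  have Pex: "\<exists>p. P n p" for n
  proof -
    have "{l (n-1)..r (n-1)} \<subseteq> f ` {u..v}" using fuv inv[of "n-1"] by auto
    then obtain s t where "u \<le> s" "s < t" "t \<le> v" "f ` {s..t} = {l (n-1)..r (n-1)}"
      using sub[OF cuv, of "l (n-1)" "r (n-1)"] inv[of "n-1"] by blast
    then show ?thesis unfolding P_def by (intro exI[of _ "(s,t)"]) auto
  qed
  define A where "A = (\<lambda>n. fst (SOME p. P n p))"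
  define B where "B = (\<lambda>n. snd (SOME p. P n p))"
  have AB: "u \<le> A n \<and> A n < B n \<and> B n \<le> v \<and> f ` {A n..B n} = {l (n - 1)..r (n - 1)}" for n
    using someI_ex[OF Pex[of n]] unfolding P_def A_def B_def by auto
  have main: "\<forall>n\<in>{Suc 0..}. 0 \<le> A n \<and> A n < B n \<and> B n \<le> 1 \<and>
        {A n..B n} \<inter> {l n..r n} \<subseteq> {l n, r n} \<and> f ` {A n..B n} = f ` {l n..r n}"
  proof
    fix n assume n: "n \<in> {Suc 0..}"
    have 1: "0 \<le> A n \<and> A n < B n \<and> B n \<le> 1" using AB[of n] u0 v1 by auto
    have 2: "f ` {A n..B n} = f ` {l n..r n}" using AB[of n] img[of "n-1"] n by auto
    have 3: "{A n..B n} \<inter> {l n..r n} \<subseteq> {l n, r n}"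
    proof
      fix x assume x: "x \<in> {A n..B n} \<inter> {l n..r n}"
      then have "x \<in> {u..v} \<inter> {a..b}" using AB[of n] inv[of n] by auto
      then have "x = a \<or> x = b" using disj by auto
      then show "x \<in> {l n, r n}" using x inv[of n] by auto
    qed
    show "0 \<le> A n \<and> A n < B n \<and> B n \<le> 1 \<and>
        {A n..B n} \<inter> {l n..r n} \<subseteq> {l n, r n} \<and> f ` {A n..B n} = f ` {l n..r n}"
      using 1 2 3 by blast
  qed
  have infN: "infinite {Suc 0..}" by (metis infinite_Ici)
  have "splitting_seq f l r" unfolding splitting_seq_def
    using tight infN main by blast
  then show ?thesis unfolding admits_splitting_seq_def by blast
qed


lemma invariance:
  fixes f :: "real \<Rightarrow> real"
  assumes cont: "continuous_on {0..1} f" and nosplit: "\<not> admits_splitting_seq f"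
    and fd: "f d = d" and d01: "d \<in> {0..1}"
    and acc: "d islimpt {x \<in> {0..1}. f x = x}"
    and y: "y \<in> {0..1}"
  shows "(d \<le> y \<longrightarrow> d \<le> f y) \<and> (y \<le> d \<longrightarrow> f y \<le> d)"
proof (rule ccontr)
  assume "\<not> ?thesis"
  then consider "d < y" "f y < d" | "y < d" "d < f y" using fd
    by (metis order_le_less not_le)
  then show False
  proof cases
    case 1
    define e where "e = min (y - d) (min (d - f y) (1/2))"
    have "e > 0" using 1 unfolding e_def by auto
    then obtain p where p: "p \<in> {0..1}" "f p = p" "p \<noteq> d" "dist p d < e"
      using acc unfolding islimpt_approachable by blast
    have pd: "\<bar>p - d\<bar> < e" using p(4) by (simp add: dist_real_def)
    consider "d < p" | "p < d" using p(3) by linarith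
    then show False
    proof cases
      case 1
      have "admits_splitting_seq f"
        by (rule split_main[OF cont, of d p p y]) (use 1 \<open>d < y\<close> \<open>f y < d\<close> p pd d01 y e_def fd in auto)
      then show False using nosplit by blast
    next
      case 2
      have "admits_splitting_seq f"
        by (rule split_main[OF cont, of p d d y]) (use 2 \<open>d < y\<close> \<open>f y < d\<close> p pd d01 y e_def fd in auto)
      then show False using nosplit by blast
    qed
  next
    case 2
    define e where "e = min (d - y) (min (f y - d) (1/2))"
    have "e > 0" using 2 unfolding e_def by auto
    then obtain p where p: "p \<in> {0..1}" "f p = p" "p \<noteq> d" "dist p d < e"
      using acc unfolding islimpt_approachable by blast
    have pd: "\<bar>p - d\<bar> < e" using p(4) by (simp add: dist_real_def)
    consider "d < p" | "p < d" using p(3) by linarith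
    then show False
    proof cases
      case 1
      have "admits_splitting_seq f"
        by (rule split_main[OF cont, of d p y d]) (use 1 \<open>y < d\<close> \<open>d < f y\<close> p pd d01 y e_def fd in auto)
      then show False using nosplit by blast
    next
      case 2
      have "admits_splitting_seq f"
        by (rule split_main[OF cont, of p d y p]) (use 2 \<open>y < d\<close> \<open>d < f y\<close> p pd d01 y e_def fd in auto)
      then show False using nosplit by blast
    qed
  qed
qed


theorem corollary3p12:
  fixes f :: "real \<Rightarrow> real" and d :: real
  assumes cont: "continuous_on {0..1} f"
    and onto: "f ` {0..1} = {0..1}"
    and nosplit: "\<not> admits_splitting_seq f"
    and acc: "d islimpt {x \<in> {0..1}. f x = x}"
  shows "inv_lim f = inv_lim_on {0..d} f \<union> inv_lim_on {d..1} f \<and>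
         inv_lim_on {0..d} f \<inter> inv_lim_on {d..1} f = {(\<lambda>_. d)}"
proof -
  have cl: "closed {x \<in> {0..1}. f x - x = 0}"
    by (rule continuous_closed_preimage_constant) (auto intro!: continuous_intros cont)
  moreover have "{x \<in> {0..1}. f x - x = 0} = {x \<in> {0..1}. f x = x}" by auto
  ultimately have cl2: "closed {x \<in> {0..1}. f x = x}" by simp
  have "d \<in> {x \<in> {0..1}. f x = x}" using cl2 acc by (metis closed_limpt)
  then have fd: "f d = d" and d01: "d \<in> {0..1}" by auto
  note inv = invariance[OF cont nosplit fd d01 acc]
  have down: "x j \<ge> d" if x: "x \<in> inv_lim f" and "x (j + i) \<ge> d" for x j i
    using that(2)
  proof (induction i)
    case 0 then show ?case by simp
  next
    case (Suc i)
    have "x (j + i) = f (x (Suc (j + i)))" using x unfolding inv_lim_def by auto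
    also have "\<dots> \<ge> d" using inv[of "x (Suc (j+i))"] Suc.prems x unfolding inv_lim_def by auto
    finally show ?case using Suc.IH by simp
  qed
  have up: "x j \<le> d" if x: "x \<in> inv_lim f" and "x (j + i) \<le> d" for x j i
    using that(2)
  proof (induction i)
    case 0 then show ?case by simp
  next
    case (Suc i)
    have "x (j + i) = f (x (Suc (j + i)))" using x unfolding inv_lim_def by auto
    also have "\<dots> \<le> d" using inv[of "x (Suc (j+i))"] Suc.prems x unfolding inv_lim_def by auto
    finally show ?case using Suc.IH by simp
  qed
  have part1: "inv_lim f \<subseteq> inv_lim_on {0..d} f \<union> inv_lim_on {d..1} f"
  proof
    fix x assume x: "x \<in> inv_lim f"
    show "x \<in> inv_lim_on {0..d} f \<union> inv_lim_on {d..1} f"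
    proof (rule ccontr)
      assume "\<not> ?thesis"
      then have n1: "\<not> (\<forall>n. x n \<in> {0..d})" and n2: "\<not> (\<forall>n. x n \<in> {d..1})"
        using x unfolding inv_lim_on_def by blast+
      obtain m where m0: "x m \<notin> {0..d}" using n1 by blast
      obtain k where k0: "x k \<notin> {d..1}" using n2 by blast
      have xr: "\<forall>n. x n \<in> {0..1}" using x unfolding inv_lim_def by blast
      have m: "x m > d" using m0 xr[rule_format, of m] by auto
      have k: "x k < d" using k0 xr[rule_format, of k] by auto
      show False
      proof (cases "m \<le> k")
        case True
        then have "x m \<le> d" using up[OF x, of m "k - m"] k by simp
        then show False using m by simp
      next
        case False
        then have "x k \<ge> d" using down[OF x, of k "m - k"] m by simp
        then show False using k by simp
      qed
    qed
  qed
  have part2: "inv_lim_on {0..d} f \<inter> inv_lim_on {d..1} f = {(\<lambda>_. d)}"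
  proof
    show "inv_lim_on {0..d} f \<inter> inv_lim_on {d..1} f \<subseteq> {(\<lambda>_. d)}"
    proof
      fix x assume "x \<in> inv_lim_on {0..d} f \<inter> inv_lim_on {d..1} f"
      then have "\<forall>n. x n = d" unfolding inv_lim_on_def by (auto intro: antisym)
      then show "x \<in> {(\<lambda>_. d)}" by auto
    qed
    show "{(\<lambda>_. d)} \<subseteq> inv_lim_on {0..d} f \<inter> inv_lim_on {d..1} f"
      using fd d01 unfolding inv_lim_on_def inv_lim_def by auto
  qed
  have "inv_lim_on {0..d} f \<union> inv_lim_on {d..1} f \<subseteq> inv_lim f"
    unfolding inv_lim_on_def by auto
  then show ?thesis using part1 part2 by blast
qed

end
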